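(* Let $x\in\Gamma_0$ be such that for all $i,j,k,l$ in the same connected component of $G_x$ with $x_{ij}>0$ and $x_{kl}>0$ one has $a_{ij}p_{ij}=a_{kl}p_{kl}$. If property $P_{G_x}$ does not hold, then $G_x$ has at least one connected component in which every vertex belongs to at least two edges of $G_x$.
   Context: Let $G=(\mathbb{V},E)$ be a finite graph with adjacency $\sim$. Let $a_{ij}=a_{ji}\ge0$ ($>0$ only if $i\sim j$) and $p_{ij}=p_{ji}\in[0,1]$ ($=0$ if $i\not\sim j$), with some $a_{ij}p_{ij}>0$. Fix $h_1\in(0,1]$; $\Delta$ is the set of arrays $x=(x_{ij})$ with $x_{ij}=x_{ji}\ge0$, $x_{ij}=0$ if $i\not\sim j$, $\sum_{i,j}x_{ij}=1$, $\sum_{(i,j):a_{ij}p_{ij}>0}x_{ij}\ge h_1$; $x_i=\sum_jx_{ij}$. $\partial\Delta$: the $x\in\Delta$ for which some vertex $i$ having a neighbour $j$ with $a_{ij}p_{ij}>0$ has $\sum_{j:a_{ij}p_{ij}>0}x_{ij}=0$. $H(x)=\sum_{(i,j):x_{ij}>0}a_{ij}p_{ij}x_{ij}^2/(x_ix_j)$; $F(x)_{ij}=x_{ij}\big(a_{ij}p_{ij}\frac{x_{ij}}{x_ix_j}-H(x)\big)$ ($F_{ij}=0$ if $x_{ij}=0$; the fraction is $0$ if $a_{ij}p_{ij}=0$); $\Gamma=\{x\in\Delta:F(x)=0\}$, $\Gamma_0=\Gamma\cap(\Delta\setminus\partial\Delta)$. $G_x$: subgraph with vertex set $\mathbb{V}$,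 $i,j$ adjacent iff $x_{ij}>0$. For a subgraph $\mathcal{G}$ of $G$ (vertex set $\mathbb{V}$), property $P_{\mathcal{G}}$ means: (1) all edges $\{i,j\}$ of $\mathcal{G}$ lying in a same connected component have the same value $a_{ij}p_{ij}$, and it is $>0$; (2) each connected component contains at most one vertex with several neighbours; (3) a vertex $i$ lies on an edge of $\mathcal{G}$ iff $a_{ij}p_{ij}>0$ for some $j\sim i$. *)

theory Defs
  imports Complex_Main
begin

definition setting :: "'v set \<Rightarrow> ('v \<Rightarrow> 'v \<Rightarrow> bool) \<Rightarrow> ('v \<Rightarrow> 'v \<Rightarrow> real) \<Rightarrow> ('v \<Rightarrow> 'v \<Rightarrow> real) \<Rightarrow> bool" where
  "setting V adj a p \<longleftrightarrow>
     finite V \<and>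
     (\<forall>i j. adj i j \<longrightarrow> i \<in> V \<and> j \<in> V) \<and>
     (\<forall>i j. adj i j \<longleftrightarrow> adj j i) \<and> (\<forall>i. \<not> adj i i) \<and>
     (\<forall>i j. a i j = a j i \<and> 0 \<le> a i j \<and> (0 < a i j \<longrightarrow> adj i j)) \<and>
     (\<forall>i j. p i j = p j i \<and> 0 \<le> p i j \<and> p i j \<le> 1 \<and> (\<not> adj i j \<longrightarrow> p i j = 0)) \<and>
     (\<exists>i\<in>V. \<exists>j\<in>V. 0 < a i j * p i j)"

definition Delta :: "'v set \<Rightarrow> ('v \<Rightarrow> 'v \<Rightarrow> bool) \<Rightarrow> ('v \<Rightarrow> 'v \<Rightarrow> real) \<Rightarrow> ('v \<Rightarrow> 'v \<Rightarrow> real) \<Rightarrow> real \<Rightarrow> ('v \<Rightarrow> 'v \<Rightarrow> real) set" where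
  "Delta V adj a p h1 = {x.
     (\<forall>i j. x i j = x j i \<and> 0 \<le> x i j \<and> (\<not> adj i j \<longrightarrow> x i j = 0)) \<and>
     (\<Sum>i\<in>V. \<Sum>j\<in>V. x i j) = 1 \<and>
     h1 \<le> (\<Sum>(i,j)\<in>{(i,j). i \<in> V \<and> j \<in> V \<and> 0 < a i j * p i j}. x i j)}"

definition vsum :: "'v set \<Rightarrow> ('v \<Rightarrow> 'v \<Rightarrow> real) \<Rightarrow> 'v \<Rightarrow> real" where
  "vsum V x i = (\<Sum>j\<in>V. x i j)"

definition bdry :: "'v set \<Rightarrow> ('v \<Rightarrow> 'v \<Rightarrow> bool) \<Rightarrow> ('v \<Rightarrow> 'v \<Rightarrow> real) \<Rightarrow> ('v \<Rightarrow> 'v \<Rightarrow> real) \<Rightarrow> real \<Rightarrow> ('v \<Rightarrow> 'v \<Rightarrow> real) set" where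
  "bdry V adj a p h1 = {x \<in> Delta V adj a p h1.
     \<exists>i\<in>V. (\<exists>j. adj i j \<and> 0 < a i j * p i j) \<and>
       (\<Sum>j\<in>{j \<in> V. 0 < a i j * p i j}. x i j) = 0}"

definition Hfun :: "'v set \<Rightarrow> ('v \<Rightarrow> 'v \<Rightarrow> real) \<Rightarrow> ('v \<Rightarrow> 'v \<Rightarrow> real) \<Rightarrow> ('v \<Rightarrow> 'v \<Rightarrow> real) \<Rightarrow> real" where
  "Hfun V a p x = (\<Sum>(i,j)\<in>{(i,j). i \<in> V \<and> j \<in> V \<and> 0 < x i j}.
      a i j * p i j * (x i j)^2 / (vsum V x i * vsum V x j))"

definition Ffun :: "'v set \<Rightarrow> ('v \<Rightarrow> 'v \<Rightarrow> real) \<Rightarrow> ('v \<Rightarrow> 'v \<Rightarrow> real) \<Rightarrow> ('v \<Rightarrow> 'v \<Rightarrow> real) \<Rightarrow> 'v \<Rightarrow> 'v \<Rightarrow> real" where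
  "Ffun V a p x i j = (if x i j = 0 then 0 else
      x i j * ((if a i j * p i j = 0 then 0 else a i j * p i j * x i j / (vsum V x i * vsum V x j))
               - Hfun V a p x))"

definition Gamma :: "'v set \<Rightarrow> ('v \<Rightarrow> 'v \<Rightarrow> bool) \<Rightarrow> ('v \<Rightarrow> 'v \<Rightarrow> real) \<Rightarrow> ('v \<Rightarrow> 'v \<Rightarrow> real) \<Rightarrow> real \<Rightarrow> ('v \<Rightarrow> 'v \<Rightarrow> real) set" where
  "Gamma V adj a p h1 = {x \<in> Delta V adj a p h1. \<forall>i\<in>V. \<forall>j\<in>V. Ffun V a p x i j = 0}"

definition Gamma0 :: "'v set \<Rightarrow> ('v \<Rightarrow> 'v \<Rightarrow> bool) \<Rightarrow> ('v \<Rightarrow> 'v \<Rightarrow> real) \<Rightarrow> ('v \<Rightarrow> 'v \<Rightarrow> real) \<Rightarrow> real \<Rightarrow> ('v \<Rightarrow> 'v \<Rightarrow> real) set" where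
  "Gamma0 V adj a p h1 = Gamma V adj a p h1 \<inter> (Delta V adj a p h1 - bdry V adj a p h1)"

definition Gx :: "('v \<Rightarrow> 'v \<Rightarrow> real) \<Rightarrow> 'v \<Rightarrow> 'v \<Rightarrow> bool" where
  "Gx x i j \<longleftrightarrow> 0 < x i j"

definition same_comp :: "('v \<Rightarrow> 'v \<Rightarrow> bool) \<Rightarrow> 'v \<Rightarrow> 'v \<Rightarrow> bool" where
  "same_comp E u w \<longleftrightarrow> E\<^sup>*\<^sup>* u w"

definition degree :: "'v set \<Rightarrow> ('v \<Rightarrow> 'v \<Rightarrow> bool) \<Rightarrow> 'v \<Rightarrow> nat" where
  "degree V E i = card {j \<in> V. E i j}"

definition propP :: "'v set \<Rightarrow> ('v \<Rightarrow> 'v \<Rightarrow> bool) \<Rightarrow> ('v \<Rightarrow> 'v \<Rightarrow> real) \<Rightarrow> ('v \<Rightarrow> 'v \<Rightarrow> real) \<Rightarrow> ('v \<Rightarrow> 'v \<Rightarrow> bool) \<Rightarrow> bool" where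
  "propP V adj a p E \<longleftrightarrow>
     (\<forall>i j k l. E i j \<and> E k l \<and> same_comp E i k \<longrightarrow>
        a i j * p i j = a k l * p k l \<and> 0 < a i j * p i j) \<and>
     (\<forall>u\<in>V. \<forall>w\<in>V. same_comp E u w \<and> 2 \<le> degree V E u \<and> 2 \<le> degree V E w \<longrightarrow> u = w) \<and>
     (\<forall>i\<in>V. (\<exists>j. E i j) \<longleftrightarrow> (\<exists>j. adj i j \<and> 0 < a i j * p i j))"

end

theory Submission
  imports Defs
begin

lemma rtranclp_sym_conv:
  assumes "\<And>a b. E a b \<Longrightarrow> E b a" and "E\<^sup>*\<^sup>* u v"
  shows "E\<^sup>*\<^sup>* v u"
  using assms(2)
proof (induction rule: rtranclp_induct)
  case base then show ?case by simp
next
  case (step y z)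
  then show ?case using assms(1) by (meson converse_rtranclp_into_rtranclp)
qed

theorem lemma11:
  fixes V :: "'v set" and adj :: "'v \<Rightarrow> 'v \<Rightarrow> bool"
    and a p x :: "'v \<Rightarrow> 'v \<Rightarrow> real" and h1 :: real
  assumes "setting V adj a p"
    and "0 < h1" and "h1 \<le> 1"
    and "x \<in> Gamma0 V adj a p h1"
    and "\<forall>i j k l. i \<in> V \<and> j \<in> V \<and> k \<in> V \<and> l \<in> V \<and>
           same_comp (Gx x) i j \<and> same_comp (Gx x) i k \<and> same_comp (Gx x) i l \<and>
           0 < x i j \<and> 0 < x k l \<longrightarrow> a i j * p i j = a k l * p k l"
    and "\<not> propP V adj a p (Gx x)"
  shows "\<exists>v\<in>V. \<forall>u\<in>V. same_comp (Gx x) v u \<longrightarrow> 2 \<le> degree V (Gx x) u"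
proof (rule ccontr)
  assume nc: "\<not> ?thesis"
  let ?E = "Gx x"
  have S: "setting V adj a p" by fact
  have fin: "finite V" using S unfolding setting_def by blast
  have adjV: "\<And>i j. adj i j \<Longrightarrow> i \<in> V \<and> j \<in> V" using S unfolding setting_def by blast
  have anz: "\<And>i j. 0 \<le> a i j" and pnz: "\<And>i j. 0 \<le> p i j"
    using S unfolding setting_def by blast+
  have apnn: "\<And>i j. 0 \<le> a i j * p i j" using anz pnz by simp
  have xD: "x \<in> Delta V adj a p h1" and xG: "x \<in> Gamma V adj a p h1"
    and xnb: "x \<notin> bdry V adj a p h1"
    using assms(4) unfolding Gamma0_def by auto
  have xsym: "\<And>i j. x i j = x j i" and xnn: "\<And>i j. 0 \<le> x i j"
    and xadj: "\<And>i j. \<not> adj i j \<Longrightarrow> x i j = 0"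
    using xD unfolding Delta_def by auto
  have eV: "\<And>i j. 0 < x i j \<Longrightarrow> adj i j \<and> i \<in> V \<and> j \<in> V"
    using xadj adjV by (metis less_irrefl)
  have Esym: "\<And>i j. ?E i j \<Longrightarrow> ?E j i" unfolding Gx_def using xsym by simp
  have vsge: "\<And>i j. j \<in> V \<Longrightarrow> x i j \<le> vsum V x i"
    unfolding vsum_def using fin xnn by (intro member_le_sum) auto
  have Fz: "\<And>i j. i \<in> V \<Longrightarrow> j \<in> V \<Longrightarrow> Ffun V a p x i j = 0"
    using xG unfolding Gamma_def by auto
  let ?H = "Hfun V a p x"
  obtain i0 j0 where ij0: "i0 \<in> V" "j0 \<in> V" "0 < a i0 j0 * p i0 j0" "0 < x i0 j0"
  proof -
    let ?S = "{(i,j). i \<in> V \<and> j \<in> V \<and> 0 < a i j * p i j}"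
    have h: "h1 \<le> (\<Sum>(i,j)\<in>?S. x i j)" using xD unfolding Delta_def by blast
    show ?thesis
    proof (rule ccontr)
      assume "\<not> ?thesis"
      then have "\<forall>(i,j)\<in>?S. x i j = 0" using that xnn
        by (auto simp: less_le)
      then have "(\<Sum>(i,j)\<in>?S. x i j) = 0" by (intro sum.neutral) auto
      then show False using h assms(2) by simp
    qed
  qed
  have Hpos: "0 < ?H"
  proof -
    let ?T = "{(i,j). i \<in> V \<and> j \<in> V \<and> 0 < x i j}"
    let ?f = "\<lambda>(i,j). a i j * p i j * (x i j)^2 / (vsum V x i * vsum V x j)"
    have finT: "finite ?T" by (rule finite_subset[of _ "V \<times> V"]) (auto simp: fin)
    have vsnn: "\<And>i. 0 \<le> vsum V x i" unfolding vsum_def using xnn by (simp add: sum_nonneg)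
    have nn: "\<forall>q\<in>?T. 0 \<le> ?f q" using apnn vsnn by (auto intro!: divide_nonneg_nonneg)
    have v1: "0 < vsum V x i0" using vsge[of j0 i0] ij0 by simp
    have v2: "0 < vsum V x j0" using vsge[of i0 j0] ij0 xsym[of i0 j0] by simp
    have pos: "0 < ?f (i0, j0)" using ij0 v1 v2 by simp
    have "?f (i0,j0) \<le> (\<Sum>q\<in>?T. ?f q)"
      by (rule member_le_sum) (use ij0 nn finT in auto)
    then show ?thesis using pos unfolding Hfun_def by simp
  qed
  have edge: "\<And>i j. 0 < x i j \<Longrightarrow> 0 < a i j * p i j \<and>
       a i j * p i j * x i j = ?H * vsum V x i * vsum V x j
       \<and> 0 < vsum V x i \<and> 0 < vsum V x j"
  proof -
    fix i j assume xp: "0 < x i j"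
    then have iV: "i \<in> V" and jV: "j \<in> V" using eV by auto
    have v1: "0 < vsum V x i" using vsge[of j i] jV xp by simp
    have v2: "0 < vsum V x j" using vsge[of i j] iV xp xsym[of i j] by simp
    have F: "Ffun V a p x i j = 0" using Fz iV jV by blast
    then have eq: "(if a i j * p i j = 0 then 0 else a i j * p i j * x i j / (vsum V x i * vsum V x j)) = ?H"
      using xp unfolding Ffun_def by (simp split: if_splits)
    have ne: "a i j * p i j \<noteq> 0" using eq Hpos by (auto split: if_splits)
    then have "a i j * p i j * x i j / (vsum V x i * vsum V x j) = ?H" using eq by simp
    then have "a i j * p i j * x i j = ?H * vsum V x i * vsum V x j"
      using v1 v2 by (simp add: field_simps)
    then show "0 < a i j * p i j \<and>
       a i j * p i j * x i j = ?H * vsum V x i * vsum V x j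
       \<and> 0 < vsum V x i \<and> 0 < vsum V x j"
      using ne apnn[of i j] v1 v2 by (simp add: less_le)
  qed
  have H5: "\<And>i j k l. i \<in> V \<Longrightarrow> j \<in> V \<Longrightarrow> k \<in> V \<Longrightarrow> l \<in> V \<Longrightarrow>
           same_comp ?E i j \<Longrightarrow> same_comp ?E i k \<Longrightarrow> same_comp ?E i l \<Longrightarrow>
           0 < x i j \<Longrightarrow> 0 < x k l \<Longrightarrow> a i j * p i j = a k l * p k l"
    using assms(5) by blast
  have P1: "\<forall>i j k l. ?E i j \<and> ?E k l \<and> same_comp ?E i k \<longrightarrow>
        a i j * p i j = a k l * p k l \<and> 0 < a i j * p i j"
  proof (intro allI impI)
    fix i j k l assume h: "?E i j \<and> ?E k l \<and> same_comp ?E i k"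
    have "same_comp ?E i l" using h unfolding same_comp_def
      using rtranclp.rtrancl_into_rtrancl[of ?E i k l] by blast
    moreover have "same_comp ?E i j" using h unfolding same_comp_def by blast
    ultimately show "a i j * p i j = a k l * p k l \<and> 0 < a i j * p i j"
      using h H5[of i j k l] eV edge unfolding Gx_def by blast
  qed
  have P3: "\<forall>i\<in>V. (\<exists>j. ?E i j) \<longleftrightarrow> (\<exists>j. adj i j \<and> 0 < a i j * p i j)"
  proof
    fix i assume iV: "i \<in> V"
    show "(\<exists>j. ?E i j) \<longleftrightarrow> (\<exists>j. adj i j \<and> 0 < a i j * p i j)"
    proof
      assume "\<exists>j. ?E i j" then show "\<exists>j. adj i j \<and> 0 < a i j * p i j"
        using eV edge unfolding Gx_def by blast
    next
      assume ex: "\<exists>j. adj i j \<and> 0 < a i j * p i j"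
      have "(\<Sum>j\<in>{j \<in> V. 0 < a i j * p i j}. x i j) \<noteq> 0"
        using xnb xD iV ex unfolding bdry_def by blast
      then have "\<exists>j. x i j \<noteq> 0"
      proof (rule contrapos_np)
        assume "\<not> (\<exists>j. x i j \<noteq> 0)"
        then show "(\<Sum>j\<in>{j \<in> V. 0 < a i j * p i j}. x i j) = 0" by simp
      qed
      then obtain j where "x i j \<noteq> 0" by blast
      then show "\<exists>j. ?E i j" using xnn[of i j] unfolding Gx_def by (auto simp: less_le)
    qed
  qed
  have P2: "\<forall>u\<in>V. \<forall>w\<in>V. same_comp ?E u w \<and> 2 \<le> degree V ?E u \<and> 2 \<le> degree V ?E w \<longrightarrow> u = w"
  proof (intro ballI impI)
    fix u w assume uV: "u \<in> V" and wV: "w \<in> V"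
      and h: "same_comp ?E u w \<and> 2 \<le> degree V ?E u \<and> 2 \<le> degree V ?E w"
    obtain l where lV: "l \<in> V" and ul: "same_comp ?E u l" and dl: "degree V ?E l < 2"
      using nc uV by (auto simp: not_le)
    have ul': "?E\<^sup>*\<^sup>* u l" using ul unfolding same_comp_def .
    have "\<exists>y. ?E y l"
    proof (cases "u = l")
      case True then show ?thesis using h dl by simp
    next
      case False
      from ul' show ?thesis
      proof (cases rule: rtranclp.cases)
        case rtrancl_refl then show ?thesis using False by simp
      next
        case (rtrancl_into_rtrancl b) then show ?thesis by blast
      qed
    qed
    then obtain y where "?E y l" by blast
    then have "0 < x l y" unfolding Gx_def using xsym[of y l] by simp
    then have "y \<in> {t \<in> V. ?E l t}" using eV[of l y] unfolding Gx_def by simp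
    then have lne: "{t \<in> V. ?E l t} \<noteq> {}" by blast
    have finN: "\<And>i. finite {t \<in> V. ?E i t}" using fin by simp
    have "card {t \<in> V. ?E l t} \<le> Suc 0" using dl unfolding degree_def by simp
    then have one: "\<forall>a1\<in>{t \<in> V. ?E l t}. \<forall>a2\<in>{t \<in> V. ?E l t}. a1 = a2"
      using card_le_Suc0_iff_eq finN by blast
    obtain j where jN: "j \<in> V" "?E l j" using lne by blast
    have uniq: "\<And>t. 0 < x l t \<Longrightarrow> t = j" using one jN eV unfolding Gx_def by blast
    have xlj: "0 < x l j" using jN unfolding Gx_def by simp
    have vsl: "vsum V x l = x l j"
    proof -
      have "vsum V x l = x l j + (\<Sum>t\<in>V - {j}. x l t)"
        unfolding vsum_def using fin jN by (simp add: sum.remove)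
      moreover have "(\<Sum>t\<in>V - {j}. x l t) = 0"
      proof (rule sum.neutral, rule ballI)
        fix t assume "t \<in> V - {j}"
        then have "\<not> 0 < x l t" using uniq by blast
        then show "x l t = 0" using xnn[of l t] by linarith
      qed
      ultimately show ?thesis by simp
    qed
    let ?c = "a l j * p l j"
    have el: "0 < ?c" "?c * x l j = ?H * vsum V x l * vsum V x j" "0 < vsum V x j"
      using edge[OF xlj] by auto
    have "?c * x l j = (?H * vsum V x j) * x l j" using el(2) vsl by (simp add: algebra_simps)
    then have cj: "?c = ?H * vsum V x j" using xlj by simp
    have jl: "same_comp ?E j l" unfolding same_comp_def using xlj xsym[of l j]
      by (simp add: Gx_def r_into_rtranclp)
    have jj: "same_comp ?E j j" unfolding same_comp_def by simp
    have nb: "\<And>m t. 0 < x j m \<Longrightarrow> 0 < x m t \<Longrightarrow> t = j"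
    proof (rule ccontr)
      fix m t assume xjm: "0 < x j m" and xmt: "0 < x m t" and tne: "t \<noteq> j"
      have mV: "m \<in> V" and tV: "t \<in> V" using eV xjm xmt by auto
      have xmj: "0 < x m j" using xjm xsym by simp
      have jm: "same_comp ?E j m" unfolding same_comp_def using xjm
        by (simp add: Gx_def r_into_rtranclp)
      have ceq: "a j l * p j l = a m j * p m j"
        using H5[of j l m j] jN lV mV jl jm jj xlj xsym[of l j] xmj by simp
      have "a j l * p j l = ?c" using S unfolding setting_def by simp
      then have cmj: "a m j * p m j = ?c" using ceq by simp
      have em: "a m j * p m j * x m j = ?H * vsum V x m * vsum V x j" "0 < vsum V x m"
        using edge[OF xmj] by auto
      then have "?c * x m j = ?c * vsum V x m" using cmj cj by (simp add: algebra_simps)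
      then have xmjv: "x m j = vsum V x m" using el(1) by auto
      have "(\<Sum>s\<in>{j,t}. x m s) \<le> vsum V x m"
        unfolding vsum_def using fin jN tV xnn by (intro sum_mono2) auto
      then have "x m j + x m t \<le> vsum V x m" using tne by simp
      then show False using xmjv xmt by simp
    qed
    have reach: "\<And>y. ?E\<^sup>*\<^sup>* j y \<Longrightarrow> y = j \<or> 0 < x j y"
    proof -
      fix y assume "?E\<^sup>*\<^sup>* j y"
      then show "y = j \<or> 0 < x j y"
      proof (induction rule: rtranclp_induct)
        case base then show ?case by simp
      next
        case (step y z)
        show ?case
        proof (cases "y = j")
          case True then show ?thesis using step(2) unfolding Gx_def by simp
        next
          case False
          then have "0 < x j y" using step(3) by simp
          moreover have "0 < x y z" using step(2) unfolding Gx_def by simp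
          ultimately show ?thesis using nb by blast
        qed
      qed
    qed
    have ju: "?E\<^sup>*\<^sup>* j u"
    proof -
      have "?E\<^sup>*\<^sup>* u j" using rtranclp.rtrancl_into_rtrancl[OF ul' jN(2)] .
      then show ?thesis by (rule rtranclp_sym_conv[of ?E, rotated]) (rule Esym)
    qed
    have jw: "?E\<^sup>*\<^sup>* j w" using ju h unfolding same_comp_def using rtranclp_trans[of ?E j u w] by simp
    have leafdeg: "\<And>m. 0 < x j m \<Longrightarrow> degree V ?E m \<le> 1"
    proof -
      fix m assume "0 < x j m"
      then have "{t \<in> V. ?E m t} \<subseteq> {j}" using nb unfolding Gx_def by blast
      then have "card {t \<in> V. ?E m t} \<le> card {j}" by (intro card_mono) auto
      then show "degree V ?E m \<le> 1" unfolding degree_def by simp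
    qed
    have "u = j"
    proof (rule ccontr)
      assume "u \<noteq> j" then have "degree V ?E u \<le> 1" using reach[OF ju] leafdeg by blast
      then show False using h by simp
    qed
    moreover have "w = j"
    proof (rule ccontr)
      assume "w \<noteq> j" then have "degree V ?E w \<le> 1" using reach[OF jw] leafdeg by blast
      then show False using h by simp
    qed
    ultimately show "u = w" by simp
  qed
  have "propP V adj a p ?E" unfolding propP_def using P1 P2 P3 by blast
  then show False using assms(6) by blast
qed

end
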